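(* Let $S$ be a semigroup, let $a\in S$, and define $P=\{x\in Sa : x\,\mathscr L\, ax\}$. Then the set of regular elements of the semigroup $Sa$ is $$\operatorname{Reg}(Sa)=\operatorname{Reg}(S)\cap P.$$
   Context: $Sa=\{xa:x\in S\}$ is the principal left ideal generated by $a$, regarded as a semigroup in its own right. For a semigroup $T$, $\operatorname{Reg}(T)=\{x\in T: x=xyx \text{ for some } y\in T\}$. $\mathscr L$ denotes Green's $\mathscr L$-relation on $S$: $x\,\mathscr L\, y$ iff $S^1x=S^1y$, where $S^1$ is $S$ with an identity adjoined if $S$ is not a monoid. *)

theory Defs
  imports Main
begin

text \<open>The ambient semigroup S is the type 'a of class semigroup_mult.\<close>

definition principal_left_ideal :: "'a::semigroup_mult \<Rightarrow> 'a set" where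
  "principal_left_ideal a = {x * a | x. True}"

text \<open>Regular elements of a subsemigroup T (T is regarded as a semigroup in its own right,
  so the inverse-candidate y must lie in T).\<close>
definition Reg :: "'a::semigroup_mult set \<Rightarrow> 'a set" where
  "Reg T = {x \<in> T. \<exists>y\<in>T. x = x * y * x}"

text \<open>S^1 x: the principal left ideal of x in S with identity adjoined.\<close>
definition S1_left :: "'a::semigroup_mult \<Rightarrow> 'a set" where
  "S1_left x = insert x {s * x | s. True}"

definition green_L :: "'a::semigroup_mult \<Rightarrow> 'a \<Rightarrow> bool" where
  "green_L x y \<longleftrightarrow> S1_left x = S1_left y"

end

theory Submission
  imports Defs
begin

theorem theorem3p2:
  fixes a :: "'a::semigroup_mult"
  shows "Reg (principal_left_ideal a) =
         Reg (UNIV :: 'a set) \<inter> {x \<in> principal_left_ideal a. green_L x (a * x)}"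
proof (rule set_eqI, rule iffI)
  fix x assume "x \<in> Reg (principal_left_ideal a)"
  then obtain s t where xs: "x = s * a" and xe: "x = x * (t * a) * x"
    by (auto simp: Reg_def principal_left_ideal_def)
  have r: "x \<in> Reg UNIV" using xe by (auto simp: Reg_def)
  have x1: "x = (x * t) * (a * x)" using xe by (simp add: mult.assoc)
  have "S1_left x = S1_left (a * x)"
  proof
    show "S1_left x \<subseteq> S1_left (a * x)"
    proof
      fix z assume "z \<in> S1_left x"
      then consider "z = x" | w where "z = w * x" by (auto simp: S1_left_def)
      then show "z \<in> S1_left (a * x)"
      proof cases
        case 1 then show ?thesis using x1 by (auto simp: S1_left_def)
      next
        case 2 then have "z = (w * (x * t)) * (a * x)" using x1 by (metis mult.assoc)
        then show ?thesis by (auto simp: S1_left_def)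
      qed
    qed
  next
    show "S1_left (a * x) \<subseteq> S1_left x"
    proof
      fix z assume "z \<in> S1_left (a * x)"
      then consider "z = a * x" | w where "z = w * (a * x)" by (auto simp: S1_left_def)
      then show "z \<in> S1_left x"
      proof cases
        case 1 then show ?thesis by (auto simp: S1_left_def)
      next
        case 2 then have "z = (w * a) * x" by (simp add: mult.assoc)
        then show ?thesis by (auto simp: S1_left_def)
      qed
    qed
  qed
  then show "x \<in> Reg UNIV \<inter> {x \<in> principal_left_ideal a. green_L x (a * x)}"
    using r xs by (auto simp: green_L_def principal_left_ideal_def)
next
  fix x assume "x \<in> Reg UNIV \<inter> {x \<in> principal_left_ideal a. green_L x (a * x)}"
  then obtain y s where xe: "x = x * y * x" and xs: "x = s * a"
    and L: "S1_left x = S1_left (a * x)"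
    by (auto simp: Reg_def principal_left_ideal_def green_L_def)
  have "x \<in> S1_left (a * x)" using L by (auto simp: S1_left_def)
  then obtain v where v: "x = v * (a * x)"
  proof (cases "x = a * x")
    case True
    then have "x = (x * y) * (a * x)" using xe by (metis mult.assoc)
    then show ?thesis using that by blast
  next
    case False
    then show ?thesis using that \<open>x \<in> S1_left (a * x)\<close> by (auto simp: S1_left_def)
  qed
  have "x * ((y * v) * a) * x = x * y * (v * (a * x))" by (simp add: mult.assoc)
  also have "\<dots> = x" using v xe by simp
  finally have "x = x * ((y * v) * a) * x" by simp
  moreover have "(y * v) * a \<in> principal_left_ideal a" by (auto simp: principal_left_ideal_def)
  moreover have "x \<in> principal_left_ideal a" using xs by (auto simp: principal_left_ideal_def)
  ultimately show "x \<in> Reg (principal_left_ideal a)" by (auto simp: Reg_def)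
qed

end
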